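(* Assume the standing assumptions (A1)–(A4) and let $\rho>0$. For every $\epsilon\ge 0$ and every $p\in\mathbb R^{n_p}$, $$|f(p)-f(p^* )|\le \epsilon\ \Longrightarrow\ |f_0(p)-f_0(p^* )|\le D_0\Bigl[\frac{2\epsilon}{\mu_0}\Bigr]^{1/2}+\frac{L_0}{2}\Bigl[\frac{2\epsilon}{\mu_0}\Bigr].$$
   Context: Let $n_p,n_c\ge 1$, let $f_0:\mathbb R^{n_p}\to\mathbb R$ and $c_i:\mathbb R^{n_p}\to\mathbb R$ ($i=1,\dots,n_c$) be continuously differentiable, and let $\{1,\dots,n_c\}=I_s\cup I_h$ be a partition into disjoint sets of soft and hard constraint indices. The original problem is $\min_{p\in\mathbb R^{n_p}} f_0(p)$ subject to $c_i(p)\le 0$ for all $i$; $f^{opt}$ denotes its optimal value and $p^{opt}$ an optimal solution (assumed to exist). For a fixed $\varepsilon_\psi>0$ let $\psi(p):=\sum_{i\in I_s}[\max\{0,c_i(p)\}]^2+\sum_{i\in I_h}[\max\{0,c_i(p)+\varepsilon_\psi\}]^2$, and for a penalty parameter $\rho>0$ let $f(p):=f_0(p)+\rho\,\psi(p)$. A differentiable function $\ell$ belongs to $\mathcal F^1_L$ if $\ell(p_2)\le \ell(p_1)+\langle \ell'(p_1),p_2-p_1\rangle+\frac L2\|p_2-p_1\|^2$ for all $p_1,p_2$, and is $\mu$-strongly convex if $\ell(p_2)\ge \ell(p_1)+\langle \ell'(p_1),p_2-p_1\rangle+\frac \mu2\|p_2-p_1\|^2$ for all $p_1,p_2$. Standing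 assumptions: (A1) $f_0(p)\ge 0$ for all $p$; (A2) $f_0\in\mathcal F^1_{L_0}$ and $\psi\in\mathcal F^1_{L_\psi}$ for some reals $L_0,L_\psi\ge 0$; (A3) $f_0$ is $\mu_0$-strongly convex for some $\mu_0>0$, and $\psi$ is convex; (A4) the set $\mathcal A:=\{p:\psi(p)=0\}$ is nonempty and there is $\beta>0$ with $\psi(p)\ge \beta\,[d(p,\mathcal A)]^2$ for all $p$, where $d(p,\mathcal A):=\min_{z\in\mathcal A}\|z-p\|$. Notation: $\|\cdot\|$ is the Euclidean norm; $p^*$ is the unique minimizer of $f$ over $\mathbb R^{n_p}$; $p_u$ is the unique unconstrained minimizer of $f_0$; $p_a$ is a fixed point with $\psi(p_a)=0$; $D_0:=\sup\{\|f_0'(p)\|:\ f_0(p)\le f_0(p_a)\}$; $d(p):=\|p-p^*\|$. *)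

theory Defs
  imports "HOL-Analysis.Analysis"
begin

text \<open>Quadratic penalty psi(p) for soft constraints Is and hard constraints Ih
  (hard constraints tightened by eps_psi).\<close>
definition psi :: "(nat \<Rightarrow> 'a \<Rightarrow> real) \<Rightarrow> nat set \<Rightarrow> nat set \<Rightarrow> real \<Rightarrow> 'a \<Rightarrow> real" where
  "psi c Is Ih eps_psi p =
     (\<Sum>i\<in>Is. (max 0 (c i p))^2) + (\<Sum>i\<in>Ih. (max 0 (c i p + eps_psi))^2)"

text \<open>Class F^1_L: differentiable with the quadratic upper bound
  (ell' p1 applied to p2 - p1 is the inner product with the gradient).\<close>
definition in_F1L :: "('a::real_normed_vector \<Rightarrow> real) \<Rightarrow> real \<Rightarrow> bool" where
  "in_F1L ell L \<longleftrightarrow> (\<forall>p. ell differentiable (at p)) \<and>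
     (\<forall>p1 p2. ell p2 \<le> ell p1 + frechet_derivative ell (at p1) (p2 - p1) + L / 2 * (norm (p2 - p1))^2)"

definition strongly_convex_with :: "('a::real_normed_vector \<Rightarrow> real) \<Rightarrow> real \<Rightarrow> bool" where
  "strongly_convex_with ell mu \<longleftrightarrow> (\<forall>p. ell differentiable (at p)) \<and>
     (\<forall>p1 p2. ell p2 \<ge> ell p1 + frechet_derivative ell (at p1) (p2 - p1) + mu / 2 * (norm (p2 - p1))^2)"

end

theory Submission
  imports Defs
begin

theorem lemma4:
  fixes f0 :: "'a::euclidean_space \<Rightarrow> real"
    and g0 :: "'a \<Rightarrow> 'a"
    and c :: "nat \<Rightarrow> 'a \<Rightarrow> real"
    and nc :: nat and Is Ih :: "nat set"
    and eps_psi rho L0 Lpsi mu0 beta eps :: real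
    and pstar pa p :: 'a
  assumes nc: "nc \<ge> 1"
    and part: "Is \<union> Ih = {1..nc}" "Is \<inter> Ih = {}"
    and f0_C1: "\<forall>q. (f0 has_derivative (\<lambda>h. g0 q \<bullet> h)) (at q)" "continuous_on UNIV g0"
    and c_C1: "\<forall>i\<in>{1..nc}. \<exists>g :: 'a \<Rightarrow> 'a.
                 (\<forall>q. (c i has_derivative (\<lambda>h. g q \<bullet> h)) (at q)) \<and> continuous_on UNIV g"
    and eps_psi: "eps_psi > 0"
    and A1: "\<forall>q. f0 q \<ge> 0"
    and A2: "L0 \<ge> 0" "Lpsi \<ge> 0" "in_F1L f0 L0" "in_F1L (psi c Is Ih eps_psi) Lpsi"
    and A3: "mu0 > 0" "strongly_convex_with f0 mu0" "convex_on UNIV (psi c Is Ih eps_psi)"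
    and A4: "{q. psi c Is Ih eps_psi q = 0} \<noteq> {}" "beta > 0"
            "\<forall>q. psi c Is Ih eps_psi q \<ge> beta * (infdist q {z. psi c Is Ih eps_psi z = 0})^2"
    and rho: "rho > 0"
    and pstar: "\<forall>q. f0 pstar + rho * psi c Is Ih eps_psi pstar \<le> f0 q + rho * psi c Is Ih eps_psi q"
    and pa: "psi c Is Ih eps_psi pa = 0"
    and eps: "eps \<ge> 0"
    and close: "\<bar>(f0 p + rho * psi c Is Ih eps_psi p) - (f0 pstar + rho * psi c Is Ih eps_psi pstar)\<bar> \<le> eps"
  shows "\<bar>f0 p - f0 pstar\<bar> \<le>
           Sup {norm (g0 q) | q. f0 q \<le> f0 pa} * sqrt (2 * eps / mu0) + L0 / 2 * (2 * eps / mu0)"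
proof -
  define P where "P = psi c Is Ih eps_psi"
  have cvx: "convex_on UNIV P" using A3(3) P_def by simp
  have pst: "\<And>q. f0 pstar + rho * P pstar \<le> f0 q + rho * P q" using pstar P_def by simp
  have paP: "P pa = 0" using pa P_def by simp
  have cl: "(f0 p + rho * P p) - (f0 pstar + rho * P pstar) \<le> eps" using close P_def by simp
  have fd: "\<And>q. frechet_derivative f0 (at q) = (\<lambda>h. g0 q \<bullet> h)"
    using f0_C1(1) frechet_derivative_at by metis
  have up: "\<And>x y :: 'a. f0 y \<le> f0 x + g0 x \<bullet> (y - x) + L0 / 2 * (norm (y - x))^2"
    using A2(3) fd unfolding in_F1L_def by metis
  have lo: "\<And>x y :: 'a. f0 y \<ge> f0 x + g0 x \<bullet> (y - x) + mu0 / 2 * (norm (y - x))^2"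
    using A3(2) fd unfolding strongly_convex_with_def by metis
  have Pnn: "\<And>q :: 'a. P q \<ge> 0" unfolding P_def psi_def by (intro add_nonneg_nonneg sum_nonneg) auto
  define d where "d = norm (p - pstar)"
  define a where "a = mu0 / 2 * d^2"
  have key: "(1 - t) * a \<le> eps" if t: "0 < t" "t < 1" for t :: real
  proof -
    define x :: 'a where "x = (1 - t) *\<^sub>R pstar + t *\<^sub>R p"
    have l1: "f0 pstar \<ge> f0 x + g0 x \<bullet> (pstar - x) + mu0 / 2 * (norm (pstar - x))^2" by (rule lo)
    have l2: "f0 p \<ge> f0 x + g0 x \<bullet> (p - x) + mu0 / 2 * (norm (p - x))^2" by (rule lo)
    have e1: "pstar - x = t *\<^sub>R (pstar - p)" unfolding x_def by (simp add: algebra_simps)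
    have e2: "p - x = (1 - t) *\<^sub>R (p - pstar)" unfolding x_def by (simp add: algebra_simps)
    have n1: "norm (pstar - x) = t * d" using e1 t unfolding d_def by (simp add: norm_minus_commute)
    have n2: "norm (p - x) = (1 - t) * d" using e2 t unfolding d_def by simp
    have lin: "(1 - t) * (g0 x \<bullet> (pstar - x)) + t * (g0 x \<bullet> (p - x)) = 0"
      unfolding e1 e2 by (simp add: inner_diff_right algebra_simps)
    have sc: "(1 - t) * f0 pstar + t * f0 p \<ge> f0 x + mu0 / 2 * t * (1 - t) * d^2"
    proof -
      have "f0 x + mu0 / 2 * t * (1 - t) * d^2 = (1 - t) * (f0 x + g0 x \<bullet> (pstar - x) + mu0 / 2 * (t*d)^2)
             + t * (f0 x + g0 x \<bullet> (p - x) + mu0 / 2 * ((1-t)*d)^2)"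
        using lin by (simp add: algebra_simps power2_eq_square divide_simps)
      also have "\<dots> \<le> (1 - t) * f0 pstar + t * f0 p"
        using l1 l2 t n1 n2 by (intro add_mono mult_left_mono) auto
      finally show ?thesis .
    qed
    have Px: "P x \<le> (1 - t) * P pstar + t * P p"
      using convex_onD[OF cvx, of t pstar p] t unfolding x_def by simp
    have "f0 pstar + rho * P pstar \<le> f0 x + rho * P x" by (rule pst)
    also have "\<dots> \<le> (1 - t) * f0 pstar + t * f0 p - mu0 / 2 * t * (1 - t) * d^2
                  + rho * ((1 - t) * P pstar + t * P p)"
      using sc Px rho by (intro add_mono mult_left_mono) auto
    finally have "t * ((1 - t) * a) \<le> t * ((f0 p + rho * P p) - (f0 pstar + rho * P pstar))"
      unfolding a_def by (simp add: algebra_simps)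
    hence "(1 - t) * a \<le> (f0 p + rho * P p) - (f0 pstar + rho * P pstar)"
      using t by simp
    thus ?thesis using cl by linarith
  qed
  have aeps: "a \<le> eps"
  proof (rule ccontr)
    assume "\<not> a \<le> eps"
    hence ag: "a > eps" by simp
    define t where "t = (a - eps) / (2 * a)"
    have a0: "a > 0" using ag eps by linarith
    have t0: "0 < t" "t < 1" unfolding t_def using ag a0 eps by (auto simp: field_simps)
    have ee: "(1 - t) * a = a - (a - eps) / 2" unfolding t_def using a0 by (simp add: field_simps)
    hence "(1 - t) * a > eps" unfolding ee using ag by (simp add: field_simps)
    thus False using key[OF t0] by linarith
  qed
  have d2: "d^2 \<le> 2 * eps / mu0" using aeps A3(1) unfolding a_def by (simp add: field_simps)
  have d0: "d \<ge> 0" unfolding d_def by simp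
  have dle: "d \<le> sqrt (2 * eps / mu0)" using d2 d0 real_le_rsqrt by blast
  define r where "r = 2 * norm (g0 pa) / mu0"
  have sub: "{norm (g0 q) | q. f0 q \<le> f0 pa} \<subseteq> (\<lambda>q. norm (g0 q)) ` cball pa r"
  proof
    fix y assume "y \<in> {norm (g0 q) | q. f0 q \<le> f0 pa}"
    then obtain q where q: "y = norm (g0 q)" "f0 q \<le> f0 pa" by blast
    have "f0 q \<ge> f0 pa + g0 pa \<bullet> (q - pa) + mu0 / 2 * (norm (q - pa))^2" by (rule lo)
    moreover have "g0 pa \<bullet> (q - pa) \<ge> - (norm (g0 pa) * norm (q - pa))"
      using Cauchy_Schwarz_ineq2[of "g0 pa" "q - pa"] by (simp add: abs_le_iff)
    ultimately have "mu0 / 2 * (norm (q - pa))^2 \<le> norm (g0 pa) * norm (q - pa)" using q by linarith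
    hence m: "(mu0 / 2 * norm (q - pa)) * norm (q - pa) \<le> norm (g0 pa) * norm (q - pa)"
      by (simp add: power2_eq_square mult.assoc)
    have "mu0 / 2 * norm (q - pa) \<le> norm (g0 pa)"
    proof (cases "norm (q - pa) = 0")
      case True thus ?thesis by simp
    next
      case False hence "norm (q - pa) > 0" by simp
      thus ?thesis using m mult_right_le_imp_le by blast
    qed
    hence "norm (q - pa) \<le> r" unfolding r_def using A3(1) by (simp add: field_simps)
    hence "q \<in> cball pa r" by (simp add: dist_norm norm_minus_commute)
    thus "y \<in> (\<lambda>q. norm (g0 q)) ` cball pa r" using q by blast
  qed
  have "compact ((\<lambda>q. norm (g0 q)) ` cball pa r)"
    by (intro compact_continuous_image continuous_on_norm continuous_on_subset[OF f0_C1(2)]) auto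
  hence bdd: "bdd_above {norm (g0 q) | q. f0 q \<le> f0 pa}"
    by (rule bdd_above_mono[OF bounded_imp_bdd_above[OF compact_imp_bounded] sub])
  have "rho * P pstar \<ge> 0" using Pnn[of pstar] rho by simp
  hence "f0 pstar \<le> f0 pa" using pst[of pa] paP by simp
  hence gD: "norm (g0 pstar) \<le> Sup {norm (g0 q) | q. f0 q \<le> f0 pa}"
    by (intro cSup_upper bdd) blast
  define D where "D = Sup {norm (g0 q) | q. f0 q \<le> f0 pa}"
  have gD': "norm (g0 pstar) \<le> D" using gD D_def by simp
  have gd: "norm (g0 pstar) * d \<le> D * sqrt (2 * eps / mu0)"
    using gD' dle d0 by (intro mult_mono) (auto intro: order_trans[OF norm_ge_zero])
  have cs: "\<bar>g0 pstar \<bullet> (p - pstar)\<bar> \<le> norm (g0 pstar) * d"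
    unfolding d_def by (rule Cauchy_Schwarz_ineq2)
  have L: "L0 / 2 * d^2 \<le> L0 / 2 * (2 * eps / mu0)" using d2 A2(1) by (intro mult_left_mono) auto
  have L': "L0 / 2 * (2 * eps / mu0) \<ge> 0" using A2(1) A3(1) eps by simp
  have u: "f0 p - f0 pstar \<le> g0 pstar \<bullet> (p - pstar) + L0 / 2 * d^2" using up[where x=pstar and y=p] d_def by simp
  have v: "f0 pstar - f0 p \<le> - (g0 pstar \<bullet> (p - pstar))"
  proof -
    have "mu0 / 2 * (norm (p - pstar))^2 \<ge> 0" using A3(1) by simp
    thus ?thesis using lo[where x=pstar and y=p] by linarith
  qed
  show ?thesis unfolding D_def[symmetric] using u v cs gd L L' by linarith
qed

end
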